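(* (i) Suppose the density $f$ is unimodal and the noise has a unimodal failure rate. Let $r^*_0\in\arg\max\{B_r/r:1\le r\le n-1\}$ and $\hat r=\max\{r:\beta_r>0\}$. Then $r^*_0\le\hat r$, and for every $\theta\in[0,1]$ there exists $r^*(\theta)\in\arg\max\{A_r(\theta):1\le r\le n-1\}$ with $r^*_0\le r^*(\theta)\le\hat r$. (ii) If the noise distribution has a decreasing failure rate (DFR), then $r^*(\theta)=n-1$ maximizes $A_r(\theta)$ over $1\le r\le n-1$ for every $\theta\in[0,1]$; i.e., maximal prize sharing ${\bf v}^{n-1}$ is optimal for any loss aversion.
   Context: Fix an integer $n\ge 2$ and a noise distribution with cdf $F$ and density $f$ on $\mathbb R$ (integrals finite). For $r=1,\dots,n$ let $g_r(u)=u^{n-r}(1-u)^{r-1}$ and $\beta_r=\binom{n-1}{r-1}\int g_r'(F(t))f(t)^2dt$; $B_r=\sum_{k=1}^r\beta_k$, which for $1\le r\le n-1$ equals $r\binom{n-1}{r}\int F(t)^{n-1-r}[1-F(t)]^{r-1}f(t)^2dt$. For $\theta\in[0,1]$ and $1\le r\le n-1$, $A_r(\theta)=\big[1+\theta\big(\frac{2r}{n}-1\big)\big]\frac{B_r}{r}$; by Proposition 2, ${\bf v}^{r}$ (awarding $r$ equal top prizes $1/r$, zero otherwise) with $r$ maximizing $A_r(\theta)$ is an effort-maximizing prize schedule. The failure (hazard) rate is $h(t)=f(t)/(1-F(t))$. A function is unimodal if it is (weakly) first increasing then decreasing (monotone functions included); the noise has a unimodal failure rate if $h$ is unimodal; it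 is DFR if $h$ is (weakly) decreasing. *)

theory Defs
  imports "HOL-Analysis.Analysis"
begin

definition gpoly :: "nat \<Rightarrow> nat \<Rightarrow> real \<Rightarrow> real" where
  "gpoly n r u = u ^ (n - r) * (1 - u) ^ (r - 1)"

definition beta :: "(real \<Rightarrow> real) \<Rightarrow> (real \<Rightarrow> real) \<Rightarrow> nat \<Rightarrow> nat \<Rightarrow> real" where
  "beta F f n r = real ((n - 1) choose (r - 1)) *
     (\<integral>t. deriv (gpoly n r) (F t) * (f t)\<^sup>2 \<partial>lborel)"

definition Bsum :: "(real \<Rightarrow> real) \<Rightarrow> (real \<Rightarrow> real) \<Rightarrow> nat \<Rightarrow> nat \<Rightarrow> real" where
  "Bsum F f n r = (\<Sum>k = 1..r. beta F f n k)"

definition Aobj :: "(real \<Rightarrow> real) \<Rightarrow> (real \<Rightarrow> real) \<Rightarrow> nat \<Rightarrow> real \<Rightarrow> nat \<Rightarrow> real" where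
  "Aobj F f n \<theta> r = (1 + \<theta> * (2 * real r / real n - 1)) * (Bsum F f n r / real r)"

definition hazard :: "(real \<Rightarrow> real) \<Rightarrow> (real \<Rightarrow> real) \<Rightarrow> real \<Rightarrow> real" where
  "hazard F f t = f t / (1 - F t)"

text \<open>unimodal on S: weakly increasing on an initial segment I of S, weakly decreasing
  on the rest (I may be empty or all of S, so monotone functions are included)\<close>
definition unimodal_on :: "real set \<Rightarrow> (real \<Rightarrow> real) \<Rightarrow> bool" where
  "unimodal_on S g \<longleftrightarrow> (\<exists>I. I \<subseteq> S \<and> (\<forall>x\<in>I. \<forall>y\<in>S. y \<le> x \<longrightarrow> y \<in> I)
      \<and> mono_on I g \<and> antimono_on (S - I) g)"

text \<open>interior of the support of the noise, where the failure rate is meaningful\<close>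
definition supp_int :: "(real \<Rightarrow> real) \<Rightarrow> real set" where
  "supp_int F = {t. 0 < F t \<and> F t < 1}"

end

theory Submission imports Defs "HOL-Probability.Distribution_Functions" begin

definition gd :: "nat \<Rightarrow> nat \<Rightarrow> real \<Rightarrow> real" where
  "gd n k u = real (n - k) * u ^ (n - k - 1) * (1 - u) ^ (k - 1)
            - real (k - 1) * u ^ (n - k) * (1 - u) ^ (k - 2)"

lemma gpoly_deriv: "(gpoly n k has_real_derivative gd n k u) (at u)"
proof -
  have d1: "((\<lambda>u. 1 - u) has_real_derivative (0 - 1)) (at u)"
    by (intro DERIV_diff DERIV_const DERIV_ident)
  note D = DERIV_mult[OF DERIV_pow[of "n - k" u] DERIV_power[OF d1, of "k - 1"]]
  have e: "real (n - k) * u ^ (n - k - Suc 0) * (1 - u) ^ (k - 1) + real (k - 1) * ((0 - 1) * (1 - u) ^ (k - 1 - Suc 0)) * u ^ (n - k) = gd n k u"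
    proof -
    have "k - 1 - Suc 0 = k - 2" "n - k - Suc 0 = n - k - 1" by simp_all
    then show ?thesis unfolding gd_def by (simp only:) (simp add: mult_ac)
  qed
  show ?thesis unfolding gpoly_def using D unfolding e .
qed
lemma deriv_gpoly: "deriv (gpoly n k) = gd n k"
  using gpoly_deriv DERIV_imp_deriv by blast

lemma binom_step: "real (N choose j) * real (N - j) = real (Suc j) * real (N choose Suc j)"
proof (cases N)
  case 0 then show ?thesis by simp
next
  case (Suc N')
  have "(N - j) * (N choose j) = N * (N' choose j)" using binomial_absorb_comp[of N j] Suc by simp
  also have "\<dots> = (N choose Suc j) * Suc j" using Suc_times_binomial_eq[of N' j] Suc by simp
  finally show ?thesis by (metis mult.commute of_nat_mult)
qed

lemma gd_sum:
  assumes "Suc m \<le> n - 1"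
  shows "(\<Sum>k=1..Suc m. real ((n - 1) choose (k - 1)) * gd n k u)
       = real (Suc m) * real ((n - 1) choose Suc m) * u ^ (n - 1 - Suc m) * (1 - u) ^ m"
  using assms
proof (induction m)
  case 0
  then show ?case by (simp add: gd_def)
next
  case (Suc m)
  have IH: "(\<Sum>k=1..Suc m. real ((n - 1) choose (k - 1)) * gd n k u)
       = real (Suc m) * real ((n - 1) choose Suc m) * u ^ (n - 1 - Suc m) * (1 - u) ^ m"
    using Suc by simp
  have bs: "real ((n - 1) choose Suc m) * real (n - 1 - Suc m) = real (Suc (Suc m)) * real ((n - 1) choose Suc (Suc m))"
    by (rule binom_step)
  have "(\<Sum>k=1..Suc (Suc m). real ((n - 1) choose (k - 1)) * gd n k u)
     = real (Suc m) * real ((n - 1) choose Suc m) * u ^ (n - 1 - Suc m) * (1 - u) ^ m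
       + real ((n - 1) choose Suc m) * gd n (Suc (Suc m)) u"
    using IH by simp
  also have "\<dots> = real ((n - 1) choose Suc m) * real (n - 1 - Suc m) * u ^ (n - 1 - Suc (Suc m)) * (1 - u) ^ Suc m"
  proof -
    have "m + 3 \<le> n" using Suc.prems by simp
    then obtain a where a: "n = m + 3 + a" using le_Suc_ex by blast
    have e: "n - 1 - Suc m = Suc a" "n - 1 - Suc (Suc m) = a" "n - Suc (Suc m) = Suc a"
      "n - Suc (Suc m) - 1 = a" "Suc (Suc m) - 2 = m" using a by auto
    have e2: "Suc (Suc m) - 1 = Suc m" by simp
    show ?thesis unfolding gd_def e e2
      by (simp add: algebra_simps)
  qed
  also have "\<dots> = real (Suc (Suc m)) * real ((n - 1) choose Suc (Suc m)) * u ^ (n - 1 - Suc (Suc m)) * (1 - u) ^ Suc m"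
    using bs by simp
  finally show ?case .
qed

lemma Bsum_Suc: "Bsum F f n (Suc r) = Bsum F f n r + beta F f n (Suc r)"
  unfolding Bsum_def by (simp add: sum.cl_ivl_Suc)

lemma Bsum_1: "Bsum F f n 1 = beta F f n 1"
  unfolding Bsum_def by simp

lemma Aobj_alt: "r \<ge> 1 \<Longrightarrow> n \<ge> 1 \<Longrightarrow> Aobj F f n \<theta> r = ((1 - \<theta>) / real r + 2 * \<theta> / real n) * Bsum F f n r"
  unfolding Aobj_def by (simp add: field_simps)

lemma part1_comb:
  assumes n2: "n \<ge> 2" and b1: "beta F f n 1 > 0"
  shows "\<forall>r0. r0 \<in> {1..n-1} \<and> (\<forall>r\<in>{1..n-1}. Bsum F f n r / real r \<le> Bsum F f n r0 / real r0) \<longrightarrow>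
          (let rhat = Max {r \<in> {1..n}. beta F f n r > 0} in
             r0 \<le> rhat \<and>
             (\<forall>\<theta>\<in>{0..1}. \<exists>r\<in>{1..n-1}.
                 (\<forall>r'\<in>{1..n-1}. Aobj F f n \<theta> r' \<le> Aobj F f n \<theta> r) \<and> r0 \<le> r \<and> r \<le> rhat))"
proof (intro allI impI)
  fix r0
  assume r0: "r0 \<in> {1..n-1} \<and> (\<forall>r\<in>{1..n-1}. Bsum F f n r / real r \<le> Bsum F f n r0 / real r0)"
  define R where "R = {r \<in> {1..n}. beta F f n r > 0}"
  define rhat where "rhat = Max R"
  have finR: "finite R" unfolding R_def by simp
  have "1 \<in> R" unfolding R_def using b1 n2 by auto
  then have "R \<noteq> {}" by auto
  have rhatR: "rhat \<in> R" unfolding rhat_def using finR \<open>R \<noteq> {}\<close> by (rule Max_in)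
  then have rh1: "1 \<le> rhat" "rhat \<le> n" unfolding R_def by auto
  have above: "beta F f n k \<le> 0" if "rhat < k" "k \<le> n" for k
  proof (rule ccontr)
    assume "\<not> beta F f n k \<le> 0"
    then have "k \<in> R" unfolding R_def using that rh1 by auto
    then have "k \<le> rhat" unfolding rhat_def using Max_ge[OF finR] by blast
    with that show False by simp
  qed
  have Ble: "Bsum F f n r \<le> Bsum F f n rhat" if "rhat \<le> r" "r \<le> n" for r
    using that
  proof (induction r rule: dec_induct)
    case base then show ?case by simp
  next
    case (step m)
    then show ?case using above[of "Suc m"] by (simp add: Bsum_Suc)
  qed
  have B1: "Bsum F f n 1 > 0" using b1 Bsum_1[of F f n] by linarith
  have r0in: "r0 \<in> {1..n-1}" and r0max: "\<And>r. r \<in> {1..n-1} \<Longrightarrow> Bsum F f n r / real r \<le> Bsum F f n r0 / real r0"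
    using r0 by auto
  have J0pos: "Bsum F f n r0 / real r0 > 0"
  proof -
    have "(1::nat) \<in> {1..n-1}" using n2 by auto
    then have "Bsum F f n 1 / real 1 \<le> Bsum F f n r0 / real r0" by (rule r0max)
    then show ?thesis using B1 by simp
  qed
  then have B0pos: "Bsum F f n r0 > 0" using r0in by (auto simp: divide_pos_pos zero_less_divide_iff)
  have r0le: "r0 \<le> rhat"
  proof (rule ccontr)
    assume "\<not> r0 \<le> rhat"
    then have lt: "rhat < r0" by simp
    have "Bsum F f n r0 \<le> Bsum F f n rhat" using Ble[of r0] lt r0in by auto
    have "Bsum F f n r0 / real r0 < Bsum F f n r0 / real rhat"
      using B0pos lt rh1 by (intro divide_strict_left_mono) auto
    also have "\<dots> \<le> Bsum F f n rhat / real rhat"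
      using \<open>Bsum F f n r0 \<le> Bsum F f n rhat\<close> rh1 by (intro divide_right_mono) auto
    also have "\<dots> \<le> Bsum F f n r0 / real r0" using r0max[of rhat] lt rh1 r0in by auto
    finally show False by simp
  qed
  have main: "\<exists>r\<in>{1..n-1}. (\<forall>r'\<in>{1..n-1}. Aobj F f n \<theta> r' \<le> Aobj F f n \<theta> r) \<and> r0 \<le> r \<and> r \<le> rhat"
    if th: "\<theta> \<in> {0..1}" for \<theta>
  proof -
    define A where "A = Aobj F f n \<theta>"
    define c where "c = (\<lambda>r::nat. (1 - \<theta>) / real r + 2 * \<theta> / real n)"
    have Aalt: "A r = c r * Bsum F f n r" if "r \<ge> 1" for r
      unfolding A_def c_def using Aobj_alt[OF that, of n] n2 by simp
    have cpos: "c r > 0" if "r \<ge> 1" for r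
    proof -
      have "(1 - \<theta>) / real r \<ge> 0" using th that by auto
      moreover have "2 * \<theta> / real n \<ge> 0" using th by auto
      moreover have "(1 - \<theta>) / real r > 0 \<or> 2 * \<theta> / real n > 0"
        using th that n2 by (cases "\<theta> = 1") auto
      ultimately show ?thesis unfolding c_def by linarith
    qed
    have cmono: "c b \<le> c a" if "1 \<le> a" "a \<le> b" for a b
      unfolding c_def using th that by (auto intro!: divide_left_mono)
    have fin: "finite (A ` {1..n-1})" by simp
    have ne: "A ` {1..n-1} \<noteq> {}" using n2 by auto
    obtain r1 where r1: "r1 \<in> {1..n-1}" "A r1 = Max (A ` {1..n-1})"
      using Max_in[OF fin ne] by auto
    have r1max: "A r' \<le> A r1" if "r' \<in> {1..n-1}" for r'
      using r1 Max_ge[OF fin] that by auto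
    have A1pos: "A 1 > 0" using Aalt[of 1] cpos[of 1] B1 by simp
    consider "r1 < r0" | "rhat < r1" | "r0 \<le> r1" "r1 \<le> rhat" by linarith
    then show ?thesis
    proof cases
      case 1
      have "A r1 \<le> A r0"
      proof -
        have p: "A r = (1 + \<theta> * (2 * real r / real n - 1)) * (Bsum F f n r / real r)" for r
          unfolding A_def Aobj_def by simp
        have pnn: "0 \<le> 1 + \<theta> * (2 * real r / real n - 1)" for r
        proof -
          have "\<theta> * (2 * real r / real n - 1) \<ge> \<theta> * (- 1)"
            using th n2 by (intro mult_left_mono) auto
          then show ?thesis using th by auto
        qed
        have pmono: "1 + \<theta> * (2 * real r1 / real n - 1) \<le> 1 + \<theta> * (2 * real r0 / real n - 1)"
          using th 1 n2 by (auto intro!: mult_left_mono divide_right_mono)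
        show ?thesis
        proof (cases "Bsum F f n r1 / real r1 \<ge> 0")
          case True
          then show ?thesis unfolding p
            using r0max[of r1] r1 pmono pnn by (intro mult_mono) auto
        next
          case False
          then have "A r1 \<le> 0" unfolding p using pnn[of r1] by (intro mult_nonneg_nonpos) auto
          also have "0 \<le> A r0" unfolding p using pnn[of r0] J0pos by (intro mult_nonneg_nonneg) auto
          finally show ?thesis .
        qed
      qed
      then have "\<forall>r'\<in>{1..n-1}. A r' \<le> A r0" using r1max by (meson order.trans)
      then show ?thesis using r0in r0le unfolding A_def[symmetric] by (intro bexI[of _ r0]) auto
    next
      case 2
      have Br1: "Bsum F f n r1 > 0"
      proof -
        have "Suc 0 \<le> n - Suc 0" using n2 by linarith
        then have "A r1 > 0" using r1max[of 1] A1pos by auto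
        then show ?thesis using Aalt[of r1] cpos[of r1] r1 by (auto simp: zero_less_mult_iff)
      qed
      have "A r1 \<le> A rhat"
        unfolding Aalt[OF \<open>1 \<le> rhat\<close>] using r1 2 rh1 Br1 Ble[of r1] cmono[of rhat r1] cpos[of rhat] cpos[of r1]
        by (subst Aalt) (auto intro!: mult_mono)
      then have "\<forall>r'\<in>{1..n-1}. A r' \<le> A rhat" using r1max by (meson order.trans)
      then show ?thesis using r0le 2 rh1 r1 unfolding A_def[symmetric]
        by (intro bexI[of _ rhat]) auto
    next
      case 3
      have "\<forall>r'\<in>{1..n-1}. A r' \<le> A r1" using r1max by blast
      then show ?thesis using r1 3 unfolding A_def[symmetric] by (intro bexI[of _ r1]) auto
    qed
  qed
  show "let rhat = Max {r \<in> {1..n}. beta F f n r > 0} in r0 \<le> rhat \<and>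
             (\<forall>\<theta>\<in>{0..1}. \<exists>r\<in>{1..n-1}.
                 (\<forall>r'\<in>{1..n-1}. Aobj F f n \<theta> r' \<le> Aobj F f n \<theta> r) \<and> r0 \<le> r \<and> r \<le> rhat)"
    unfolding Let_def R_def[symmetric] rhat_def[symmetric] using r0le main by blast
qed

locale noise =
  fixes F f :: "real \<Rightarrow> real" and n :: nat
  assumes n2: "n \<ge> 2"
    and f_nonneg: "\<And>t. f t \<ge> 0"
    and f_int: "integrable lborel f"
    and f_total: "(\<integral>t. f t \<partial>lborel) = 1"
    and F_cdf: "\<And>x. F x = (LINT t:{..x}|lborel. f t)"
    and f2_int: "integrable lborel (\<lambda>t. (f t)\<^sup>2)"
begin

definition M where "M = density lborel (\<lambda>t. ennreal (f t))"

lemma f_meas[measurable]: "f \<in> borel_measurable borel"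
  using borel_measurable_integrable[OF f_int] by simp

lemma sets_M[simp]: "sets M = sets borel" and space_M[simp]: "space M = UNIV"
  by (simp_all add: M_def)

lemma measure_M: "A \<in> sets borel \<Longrightarrow> measure M A = (\<integral>t. indicator A t * f t \<partial>lborel)"
proof -
  assume A: "A \<in> sets borel"
  have "measure M A = integral\<^sup>L M (indicator A)" by simp
  also have "\<dots> = (\<integral>t. f t *\<^sub>R indicator A t \<partial>lborel)"
    unfolding M_def using A by (intro integral_density) (auto simp: f_nonneg)
  finally show ?thesis by (simp add: mult.commute)
qed

lemma prob_M: "prob_space M"
proof
  have "emeasure M (space M) = (\<integral>\<^sup>+ t. ennreal (f t) \<partial>lborel)"
    by (simp add: M_def emeasure_density)
  also have "\<dots> = ennreal (\<integral>t. f t \<partial>lborel)"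
    using f_int f_nonneg by (intro nn_integral_eq_integral) auto
  finally show "emeasure M (space M) = 1" by (simp add: f_total)
qed

lemma rd_M: "real_distribution M"
proof -
  interpret prob_space M by (rule prob_M)
  show ?thesis by unfold_locales simp_all
qed

interpretation rd: real_distribution M by (rule rd_M)

lemma cdf_M: "cdf M = F"
proof
  fix x show "cdf M x = F x"
    unfolding cdf_def F_cdf set_lebesgue_integral_def
    by (subst measure_M) (auto simp: mult.commute)
qed

lemma M_Iic: "measure M {..x} = F x"
  using fun_cong[OF cdf_M, of x] by (simp add: cdf_def)

lemma F_mono: "x \<le> y \<Longrightarrow> F x \<le> F y"
  using rd.cdf_nondecreasing cdf_M by metis

lemma F_nonneg: "0 \<le> F x" and F_le1: "F x \<le> 1"
  using rd.cdf_nonneg rd.cdf_bounded_prob cdf_M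
  by metis+

lemma F_meas[measurable]: "F \<in> borel_measurable borel"
  by (rule borel_measurable_mono) (simp add: mono_def F_mono)

lemma F_cont: "isCont F x"
proof -
  have "measure M {x} = (\<integral>t. indicator {x} t * f t \<partial>lborel)" by (simp add: measure_M)
  also have "\<dots> = 0"
    by (rule integral_eq_zero_AE) (use AE_lborel_singleton[of x] in \<open>auto elim!: eventually_mono\<close>)
  finally show ?thesis
    using rd.isCont_cdf[of x] cdf_M by simp
qed

lemma F_top: "(F \<longlongrightarrow> 1) at_top" and F_bot: "(F \<longlongrightarrow> 0) at_bot"
  using rd.cdf_lim_at_top_prob rd.cdf_lim_at_bot cdf_M
  by metis+

lemma F_surj: assumes "0 < y" "y < 1" shows "\<exists>t. F t = y"
proof -
  from F_bot assms(1) have "eventually (\<lambda>t. F t < y) at_bot" by (rule order_tendstoD)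
  then obtain a where a: "F a < y" by (auto simp: eventually_at_bot_linorder)
  from F_top assms(2) have "eventually (\<lambda>t. F t > y) at_top" by (rule order_tendstoD)
  then obtain N where N: "\<And>t. t \<ge> N \<Longrightarrow> F t > y" by (auto simp: eventually_at_top_linorder)
  define b where "b = max a N"
  have b: "F b > y" "b \<ge> a" using N by (auto simp: b_def)
  from IVT[of F a y b] a b F_cont show ?thesis by force
qed

definition U where "U = density lborel (\<lambda>u. ennreal (indicator {0..1::real} u))"

lemma rd_U: "real_distribution U"
proof -
  have "emeasure U UNIV = emeasure lborel {0..1::real}"
    unfolding U_def by (subst emeasure_density) (auto simp: ennreal_indicator nn_integral_indicator)
  then have "prob_space U" by (intro prob_spaceI) (simp add: U_def)
  then interpret prob_space U .
  show ?thesis by unfold_locales (simp add: U_def)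
qed

lemma measure_U_Iic: "measure U {..x} = (if x < 0 then 0 else if x \<le> 1 then x else 1)"
proof -
  have "emeasure U {..x} = emeasure lborel ({0..1} \<inter> {..x})"
  proof -
    have "emeasure U {..x} = (\<integral>\<^sup>+ u. ennreal (indicator {0..1} u) * indicator {..x} u \<partial>lborel)"
      unfolding U_def by (rule emeasure_density) auto
    also have "\<dots> = (\<integral>\<^sup>+ u. indicator ({0..1} \<inter> {..x}) u \<partial>lborel)"
      by (intro nn_integral_cong) (auto split: split_indicator)
    also have "\<dots> = emeasure lborel ({0..1} \<inter> {..x})" by (rule nn_integral_indicator) auto
    finally show ?thesis .
  qed
  moreover have "{0..1} \<inter> {..x} = (if x < 0 then {} else if x \<le> 1 then {0..x} else {0..1::real})"
    by auto
  ultimately show ?thesis by (auto simp: measure_def)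
qed

lemma measure_M_F_le: "measure M {t. F t \<le> x} = (if x < 0 then 0 else if x \<le> 1 then x else 1)"
proof -
  consider "x < 0" | "x \<ge> 1" | "0 \<le> x" "x < 1" by linarith
  then show ?thesis
  proof cases
    case 1
    have "F t > x" for t using F_nonneg[of t] 1 by linarith
    then have "{t. F t \<le> x} = {}" by (auto simp: not_le[symmetric])
    with 1 show ?thesis by simp
  next
    case 2
    have "F t \<le> x" for t using F_le1[of t] 2 by linarith
    then have "{t. F t \<le> x} = UNIV" by auto
    with 2 show ?thesis using rd.prob_space by (auto simp: not_less)
  next
    case 3
    have up: "measure M {t. F t \<le> x} \<le> x"
    proof (rule field_le_epsilon)
      fix e :: real assume e: "0 < e"
      define e' where "e' = min e ((1 - x) / 2)"
      have "e' \<le> (1 - x) / 2" unfolding e'_def by (rule min.cobounded2)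
      have e': "0 < e'" "e' \<le> e" "x + e' < 1" using e 3 \<open>e' \<le> (1 - x) / 2\<close> by (auto simp: e'_def)
      obtain b where b: "F b = x + e'" using F_surj[of "x + e'"] e' 3 by auto
      have "{t. F t \<le> x} \<subseteq> {..b}"
      proof
        fix t assume "t \<in> {t. F t \<le> x}"
        then have "F t < F b" using b e' by auto
        then show "t \<in> {..b}" using F_mono[of b t] by (cases "t \<le> b") auto
      qed
      then have "measure M {t. F t \<le> x} \<le> measure M {..b}"
        by (intro rd.finite_measure_mono) auto
      also have "\<dots> = x + e'" using M_Iic b by simp
      finally show "measure M {t. F t \<le> x} \<le> x + e" using e' by simp
    qed
    have low: "x \<le> measure M {t. F t \<le> x}"
    proof (cases "x = 0")
      case True then show ?thesis by simp
    next
      case False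
      obtain a where a: "F a = x" using F_surj[of x] 3 False by auto
      have "x = measure M {..a}" using M_Iic a by simp
      also have "\<dots> \<le> measure M {t. F t \<le> x}"
        using a F_mono by (intro rd.finite_measure_mono) auto
      finally show ?thesis .
    qed
    show ?thesis using up low 3 by simp
  qed
qed

lemma distr_F: "distr M borel F = U"
proof (rule cdf_unique)
  show "real_distribution (distr M borel F)" by (rule rd.real_distribution_distr) simp
  show "real_distribution U" by (rule rd_U)
  show "cdf (distr M borel F) = cdf U"
  proof
    fix x
    have "cdf (distr M borel F) x = measure M (F -` {..x} \<inter> space M)"
      unfolding cdf_def by (subst measure_distr) auto
    also have "F -` {..x} \<inter> space M = {t. F t \<le> x}" by auto
    finally show "cdf (distr M borel F) x = cdf U x"
      by (simp add: cdf_def measure_U_Iic measure_M_F_le)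
  qed
qed

lemma transfer:
  fixes \<phi> :: "real \<Rightarrow> real"
  assumes [measurable]: "\<phi> \<in> borel_measurable borel"
  shows "(\<integral>t. f t * \<phi> (F t) \<partial>lborel) = (\<integral>u. indicator {0..1} u * \<phi> u \<partial>lborel)"
proof -
  have "(\<integral>t. f t * \<phi> (F t) \<partial>lborel) = integral\<^sup>L M (\<lambda>t. \<phi> (F t))"
    unfolding M_def by (subst integral_density) (auto simp: f_nonneg)
  also have "\<dots> = integral\<^sup>L (distr M borel F) \<phi>"
    by (subst integral_distr) auto
  also have "\<dots> = integral\<^sup>L U \<phi>" by (simp add: distr_F)
  also have "\<dots> = (\<integral>u. indicator {0..1} u * \<phi> u \<partial>lborel)"
    unfolding U_def by (subst integral_density) auto
  finally show ?thesis .
qed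

lemma AE_supp: "AE t in lborel. f t = 0 \<or> (0 < F t \<and> F t < 1)"
proof -
  have "AE u in U. 0 < u \<and> u < 1"
    unfolding U_def
  proof (subst AE_density)
    have "AE u in lborel. u \<noteq> (0::real) \<and> u \<noteq> 1"
      using AE_lborel_singleton[of "0::real"] AE_lborel_singleton[of "1::real"] by eventually_elim auto
    then show "AE u in lborel. 0 < ennreal (indicator {0..1::real} u) \<longrightarrow> 0 < u \<and> u < 1"
      by eventually_elim (auto simp: indicator_def)
  qed auto
  then have "AE u in distr M borel F. 0 < u \<and> u < 1" unfolding distr_F .
  then have "AE t in M. 0 < F t \<and> F t < 1" by (subst (asm) AE_distr_iff) auto
  then have "AE t in lborel. 0 < f t \<longrightarrow> (0 < F t \<and> F t < 1)"
    unfolding M_def by (subst (asm) AE_density) auto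
  then show ?thesis by eventually_elim (use f_nonneg in \<open>auto simp: less_le\<close>)
qed

lemma bound01:
  assumes "continuous_on UNIV (p :: real \<Rightarrow> real)"
  obtains K where "\<And>u. u \<in> {0..1} \<Longrightarrow> \<bar>p u\<bar> \<le> K"
proof -
  have "compact (p ` {0..1})"
    by (rule compact_continuous_image) (auto intro: continuous_on_subset[OF assms])
  then obtain K where "\<forall>x\<in>p ` {0..1}. norm x \<le> K" using compact_imp_bounded bounded_iff by metis
  then show ?thesis by (intro that) auto
qed

lemma int_poly2:
  assumes c: "continuous_on UNIV (p :: real \<Rightarrow> real)"
  shows "integrable lborel (\<lambda>t. p (F t) * (f t)\<^sup>2)"
proof -
  obtain K where K: "\<And>u. u \<in> {0..1} \<Longrightarrow> \<bar>p u\<bar> \<le> K" using bound01[OF c] by blast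
  have [measurable]: "p \<in> borel_measurable borel" by (rule borel_measurable_continuous_onI[OF c])
  show ?thesis
  proof (rule Bochner_Integration.integrable_bound)
    show "integrable lborel (\<lambda>t. K * (f t)\<^sup>2)" using f2_int by simp
    show "(\<lambda>t. p (F t) * (f t)\<^sup>2) \<in> borel_measurable lborel" by measurable
    show "AE t in lborel. norm (p (F t) * (f t)\<^sup>2) \<le> norm (K * (f t)\<^sup>2)"
    proof (rule AE_I2)
      fix t
      have "\<bar>p (F t)\<bar> \<le> K" using K F_nonneg F_le1 by auto
      then show "norm (p (F t) * (f t)\<^sup>2) \<le> norm (K * (f t)\<^sup>2)"
        by (auto simp: abs_mult intro!: mult_right_mono)
    qed
  qed
qed

lemma int_poly1:
  assumes c: "continuous_on UNIV (p :: real \<Rightarrow> real)"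
  shows "integrable lborel (\<lambda>t. p (F t) * f t)"
proof -
  obtain K where K: "\<And>u. u \<in> {0..1} \<Longrightarrow> \<bar>p u\<bar> \<le> K" using bound01[OF c] by blast
  have [measurable]: "p \<in> borel_measurable borel" by (rule borel_measurable_continuous_onI[OF c])
  show ?thesis
  proof (rule Bochner_Integration.integrable_bound)
    show "integrable lborel (\<lambda>t. K * f t)" using f_int by simp
    show "(\<lambda>t. p (F t) * f t) \<in> borel_measurable lborel" by measurable
    show "AE t in lborel. norm (p (F t) * f t) \<le> norm (K * f t)"
    proof (rule AE_I2)
      fix t
      have "\<bar>p (F t)\<bar> \<le> K" using K F_nonneg F_le1 by auto
      then show "norm (p (F t) * f t) \<le> norm (K * f t)"
        using f_nonneg[of t] by (auto simp: abs_mult intro!: mult_right_mono)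
    qed
  qed
qed

definition I where
  "I r = real ((n - 1) choose r) * (\<integral>t. F t ^ (n - 1 - r) * (1 - F t) ^ (r - 1) * (f t)\<^sup>2 \<partial>lborel)"

lemma Bsum_closed:
  assumes "1 \<le> r" "r \<le> n - 1"
  shows "Bsum F f n r = real r * I r"
proof -
  obtain m where m: "r = Suc m" using assms by (cases r) auto
  have int: "integrable lborel (\<lambda>t. gd n k (F t) * (f t)\<^sup>2)" for k
    by (rule int_poly2) (auto simp: gd_def intro!: continuous_intros)
  have "Bsum F f n r = (\<Sum>k=1..r. (\<integral>t. real ((n - 1) choose (k - 1)) * (gd n k (F t) * (f t)\<^sup>2) \<partial>lborel))"
    unfolding Bsum_def beta_def deriv_gpoly by simp
  also have "\<dots> = (\<integral>t. (\<Sum>k=1..r. real ((n - 1) choose (k - 1)) * (gd n k (F t) * (f t)\<^sup>2)) \<partial>lborel)"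
    by (subst Bochner_Integration.integral_sum) (auto intro: int)
  also have "\<dots> = (\<integral>t. (\<Sum>k=1..r. real ((n - 1) choose (k - 1)) * gd n k (F t)) * (f t)\<^sup>2 \<partial>lborel)"
    by (simp add: sum_distrib_right mult.assoc)
  also have "\<dots> = (\<integral>t. (real r * real ((n - 1) choose r)) * (F t ^ (n - 1 - r) * (1 - F t) ^ (r - 1) * (f t)\<^sup>2) \<partial>lborel)"
    using gd_sum[of m n] assms m by (simp add: mult.assoc)
  also have "\<dots> = real r * I r" unfolding I_def by simp
  finally show ?thesis .
qed

lemma I_nonneg: "I r \<ge> 0"
  unfolding I_def using F_nonneg F_le1
  by (intro mult_nonneg_nonneg integral_nonneg_AE AE_I2) auto

lemma I_mono_step:
  assumes dfr: "antimono_on (supp_int F) (hazard F f)" and r: "1 \<le> r" "Suc r \<le> n - 1"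
  shows "I r \<le> I (Suc r)"
proof -
  obtain b where b: "r = Suc b" using r by (cases r) auto
  have "b + 3 \<le> n" using r b by simp
  then obtain a where a: "n = b + 3 + a" using le_Suc_ex by blast
  define c1 where "c1 = real ((n - 1) choose r)"
  define c2 where "c2 = real ((n - 1) choose Suc r)"
  have bs: "c1 * real (Suc a) = real (Suc (Suc b)) * c2"
    using binom_step[of "n - 1" r] a b unfolding c1_def c2_def by (simp add: numeral_3_eq_3)
  have c1pos: "c1 > 0" unfolding c1_def using r by simp
  have c2pos: "c2 > 0" unfolding c2_def using r by simp
  define E where "E = (\<lambda>u::real. c2 * u ^ a * (1 - u) ^ Suc b - c1 * u ^ Suc a * (1 - u) ^ b)"
  define D where "D = (\<lambda>u::real. (1 - u) * E u)"
  define L where "L = (\<lambda>u::real. c2 * (1 - u) - c1 * u)"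
  have DL: "D u = u ^ a * (1 - u) ^ Suc b * L u" for u
    unfolding D_def E_def L_def by (simp add: algebra_simps)
  have Ir: "I r = c1 * (\<integral>t. F t ^ Suc a * (1 - F t) ^ b * (f t)\<^sup>2 \<partial>lborel)"
    unfolding I_def c1_def using a b by (simp add: numeral_3_eq_3)
  have Ir1: "I (Suc r) = c2 * (\<integral>t. F t ^ a * (1 - F t) ^ Suc b * (f t)\<^sup>2 \<partial>lborel)"
    unfolding I_def c2_def using a b by (simp add: numeral_3_eq_3)
  have cE: "continuous_on UNIV E" unfolding E_def by (intro continuous_intros)
  have cD: "continuous_on UNIV D" unfolding D_def by (intro continuous_intros cE)
  have diff: "I (Suc r) - I r = (\<integral>t. E (F t) * (f t)\<^sup>2 \<partial>lborel)"
  proof -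
    have i1: "integrable lborel (\<lambda>t. F t ^ a * (1 - F t) ^ Suc b * (f t)\<^sup>2)"
      using int_poly2[of "\<lambda>u. u ^ a * (1 - u) ^ Suc b"] by (simp add: continuous_intros)
    have i2: "integrable lborel (\<lambda>t. F t ^ Suc a * (1 - F t) ^ b * (f t)\<^sup>2)"
      using int_poly2[of "\<lambda>u. u ^ Suc a * (1 - u) ^ b"] by (simp add: continuous_intros)
    have "I (Suc r) - I r = (\<integral>t. c2 * (F t ^ a * (1 - F t) ^ Suc b * (f t)\<^sup>2) - c1 * (F t ^ Suc a * (1 - F t) ^ b * (f t)\<^sup>2) \<partial>lborel)"
      unfolding Ir Ir1 using i1 i2 by (subst Bochner_Integration.integral_diff) auto
    also have "\<dots> = (\<integral>t. E (F t) * (f t)\<^sup>2 \<partial>lborel)"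
      unfolding E_def by (rule Bochner_Integration.integral_cong) (auto simp: algebra_simps)
    finally show ?thesis .
  qed
  have zero: "(\<integral>t. f t * D (F t) \<partial>lborel) = 0"
  proof -
    define \<Phi> where "\<Phi> = (\<lambda>u::real. c1 / real (Suc (Suc b)) * (u ^ Suc a * (1 - u) ^ Suc (Suc b)))"
    have d1: "((\<lambda>u. 1 - u) has_real_derivative (0 - 1)) (at u)" for u :: real
      by (intro DERIV_diff DERIV_const DERIV_ident)
    have dPhi: "(\<Phi> has_real_derivative D u) (at u)" for u
    proof -
      note Dm = DERIV_cmult[OF DERIV_mult[OF DERIV_pow[of "Suc a" u] DERIV_power[OF d1[of u], of "Suc (Suc b)"]], of "c1 / real (Suc (Suc b))"]
      have e: "c1 / real (Suc (Suc b)) * (real (Suc a) * u ^ (Suc a - Suc 0) * (1 - u) ^ Suc (Suc b) +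
          real (Suc (Suc b)) * ((0 - 1) * (1 - u) ^ (Suc (Suc b) - Suc 0)) * u ^ Suc a) = D u"
      proof -
        define X where "X = c1 / real (Suc (Suc b))"
        have x1: "X * real (Suc a) = c2" unfolding X_def using bs by (simp add: field_simps)
        have x2: "X * real (Suc (Suc b)) = c1" unfolding X_def by simp
        have "X * (real (Suc a) * u ^ (Suc a - Suc 0) * (1 - u) ^ Suc (Suc b) +
          real (Suc (Suc b)) * ((0 - 1) * (1 - u) ^ (Suc (Suc b) - Suc 0)) * u ^ Suc a)
          = (X * real (Suc a)) * (u ^ a * (1 - u) ^ Suc (Suc b)) - (X * real (Suc (Suc b))) * (u ^ Suc a * (1 - u) ^ Suc b)"
          by (simp only: diff_Suc_Suc diff_zero) (simp add: algebra_simps)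
        also have "\<dots> = c2 * (u ^ a * (1 - u) ^ Suc (Suc b)) - c1 * (u ^ Suc a * (1 - u) ^ Suc b)"
          unfolding x1 x2 ..
        also have "\<dots> = D u" unfolding D_def E_def by (simp add: algebra_simps)
        finally show ?thesis unfolding X_def .
      qed
      show ?thesis unfolding \<Phi>_def using Dm unfolding e .
    qed
    have "(\<integral>t. f t * D (F t) \<partial>lborel) = (\<integral>u. indicator {0..1} u * D u \<partial>lborel)"
      by (rule transfer) (rule borel_measurable_continuous_onI[OF cD])
    also have "\<dots> = (\<integral>u. indicator {0..1} u *\<^sub>R D u \<partial>lborel)" by simp
    also have "\<dots> = \<Phi> 1 - \<Phi> 0"
    proof (rule integral_FTC_atLeastAtMost)
      show "continuous_on {0..1} D" using cD by (rule continuous_on_subset) auto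
      fix x :: real
      show "(\<Phi> has_vector_derivative D x) (at x within {0..1})"
        using dPhi[of x] by (simp add: has_real_derivative_iff_has_vector_derivative[symmetric] has_field_derivative_at_within)
    qed simp
    also have "\<dots> = 0" unfolding \<Phi>_def by simp
    finally show ?thesis .
  qed
  define S where "S = supp_int F"
  define hz where "hz = hazard F f"
  have hz_nn: "hz t \<ge> 0" if "t \<in> S" for t
    using that f_nonneg[of t] unfolding S_def hz_def supp_int_def hazard_def by auto
  define u0 where "u0 = c2 / (2 * (c1 + c2))"
  have u0: "0 < u0" "u0 < 1" unfolding u0_def using c1pos c2pos by (auto simp: field_simps)
  have Lu0: "L u0 > 0"
  proof -
    have "L u0 = c2 - (c1 + c2) * u0" unfolding L_def by (simp add: algebra_simps)
    also have "\<dots> = c2 / 2" unfolding u0_def using c1pos c2pos by (simp add: field_simps)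
    finally show ?thesis using c2pos by simp
  qed
  obtain t0 where t0: "F t0 = u0" using F_surj u0 by blast
  define P where "P = {t \<in> S. D (F t) > 0}"
  have t0P: "t0 \<in> P" unfolding P_def S_def supp_int_def using t0 u0 Lu0 by (simp add: DL)
  define c where "c = Inf (hz ` P)"
  have bdd: "bdd_below (hz ` P)" unfolding P_def using hz_nn by (auto intro!: bdd_belowI[of _ 0])
  have Lpos: "L (F t) > 0" if "D (F t) > 0" for t
  proof (rule ccontr)
    assume "\<not> L (F t) > 0"
    then have "D (F t) \<le> 0" unfolding DL using F_nonneg[of t] F_le1[of t]
      by (intro mult_nonneg_nonpos) auto
    with that show False by simp
  qed
  have Lneg: "L (F t) < 0" if "D (F t) < 0" for t
  proof (rule ccontr)
    assume "\<not> L (F t) < 0"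
    then have "D (F t) \<ge> 0" unfolding DL using F_nonneg[of t] F_le1[of t]
      by (intro mult_nonneg_nonneg) auto
    with that show False by simp
  qed
  have key: "D (F t) * (hz t - c) \<ge> 0" if tS: "t \<in> S" for t
  proof -
    consider "D (F t) > 0" | "D (F t) < 0" | "D (F t) = 0" by linarith
    then show ?thesis
    proof cases
      case 1
      then have "t \<in> P" using tS unfolding P_def by auto
      then have "c \<le> hz t" unfolding c_def using bdd by (intro cInf_lower) auto
      then show ?thesis using 1 by simp
    next
      case 2
      have "hz t \<le> c" unfolding c_def
      proof (rule cInf_greatest)
        show "hz ` P \<noteq> {}" using t0P by auto
        fix y assume "y \<in> hz ` P"
        then obtain s where s: "s \<in> P" "y = hz s" by auto
        have "L (F t) < L (F s)" using Lneg[OF 2] Lpos[of s] s unfolding P_def by auto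
        then have "(c1 + c2) * F s < (c1 + c2) * F t" unfolding L_def by (simp add: algebra_simps)
        then have "F s < F t" using c1pos c2pos by (simp add: mult_less_cancel_left_pos)
        then have "s \<le> t" using F_mono[of t s] by (cases "s \<le> t") auto
        then show "hz t \<le> y" using dfr s tS unfolding P_def S_def hz_def monotone_on_def by auto
      qed
      then show ?thesis using 2 by (simp add: mult_nonpos_nonpos)
    next
      case 3 then show ?thesis by simp
    qed
  qed
  have iE: "integrable lborel (\<lambda>t. E (F t) * (f t)\<^sup>2)" by (rule int_poly2[OF cE])
  have iD: "integrable lborel (\<lambda>t. f t * D (F t))"
    using int_poly1[OF cD] by (simp add: mult.commute)
  have "0 \<le> (\<integral>t. E (F t) * (f t)\<^sup>2 - c * (f t * D (F t)) \<partial>lborel)"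
  proof (rule integral_nonneg_AE)
    show "AE t in lborel. 0 \<le> E (F t) * (f t)\<^sup>2 - c * (f t * D (F t))"
      using AE_supp
    proof eventually_elim
      case (elim t)
      then show ?case
      proof
        assume "f t = 0" then show ?thesis by simp
      next
        assume tS': "0 < F t \<and> F t < 1"
        then have tS: "t \<in> S" unfolding S_def supp_int_def by simp
        have "E (F t) * (f t)\<^sup>2 - c * (f t * D (F t)) = f t * (D (F t) * (hz t - c))"
          using tS' unfolding hz_def hazard_def D_def by (simp add: field_simps power2_eq_square)
        also have "\<dots> \<ge> 0" using key[OF tS] f_nonneg[of t] by simp
        finally show ?thesis .
      qed
    qed
  qed
  also have "\<dots> = (\<integral>t. E (F t) * (f t)\<^sup>2 \<partial>lborel) - c * (\<integral>t. f t * D (F t) \<partial>lborel)"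
    using iE iD by (subst Bochner_Integration.integral_diff) auto
  also have "\<dots> = I (Suc r) - I r" using zero diff by simp
  finally show ?thesis by simp
qed

lemma beta1_pos: "beta F f n 1 > 0"
proof -
  have "beta F f n 1 = Bsum F f n 1" using Bsum_1[of F f n] by linarith
  also have "\<dots> = I 1" using Bsum_closed[of 1] n2 by simp
  also have "\<dots> = real (n - 1) * (\<integral>t. F t ^ (n - 2) * (f t)\<^sup>2 \<partial>lborel)"
    unfolding I_def by (simp add: numeral_2_eq_2)
  finally have eq: "beta F f n 1 = real (n - 1) * (\<integral>t. F t ^ (n - 2) * (f t)\<^sup>2 \<partial>lborel)" .
  have int: "integrable lborel (\<lambda>t. F t ^ (n - 2) * (f t)\<^sup>2)"
    using int_poly2[of "\<lambda>u. u ^ (n - 2)"] by (simp add: continuous_intros)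
  have nn: "AE t in lborel. 0 \<le> F t ^ (n - 2) * (f t)\<^sup>2" using F_nonneg by simp
  have pos: "(\<integral>t. F t ^ (n - 2) * (f t)\<^sup>2 \<partial>lborel) > 0"
  proof (rule ccontr)
    assume "\<not> ?thesis"
    moreover have "(\<integral>t. F t ^ (n - 2) * (f t)\<^sup>2 \<partial>lborel) \<ge> 0" using nn by (rule integral_nonneg_AE)
    ultimately have "(\<integral>t. F t ^ (n - 2) * (f t)\<^sup>2 \<partial>lborel) = 0" by simp
    then have "AE t in lborel. F t ^ (n - 2) * (f t)\<^sup>2 = 0"
      using integral_nonneg_eq_0_iff_AE[OF int nn] by simp
    then have "AE t in lborel. f t = 0" using AE_supp by eventually_elim auto
    then have "(\<integral>t. f t \<partial>lborel) = 0" by (rule integral_eq_zero_AE)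
    then show False using f_total by simp
  qed
  show ?thesis unfolding eq using pos n2 by simp
qed

lemma part2:
  assumes dfr: "antimono_on (supp_int F) (hazard F f)"
  shows "\<forall>\<theta>\<in>{0..1}. \<forall>r\<in>{1..n-1}. Aobj F f n \<theta> r \<le> Aobj F f n \<theta> (n - 1)"
proof (intro ballI)
  fix \<theta> :: real and r :: nat
  assume th: "\<theta> \<in> {0..1}" and r: "r \<in> {1..n-1}"
  have Imono: "I r \<le> I s" if "r \<le> s" "s \<le> n - 1" "1 \<le> r" for r s
    using that
  proof (induction s rule: dec_induct)
    case base then show ?case by simp
  next
    case (step m)
    then have "I m \<le> I (Suc m)" by (intro I_mono_step[OF dfr]) auto
    with step show ?case by simp
  qed
  define p where "p = (\<lambda>r::nat. 1 + \<theta> * (2 * real r / real n - 1))"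
  have A: "Aobj F f n \<theta> k = p k * I k" if "1 \<le> k" "k \<le> n - 1" for k
    unfolding Aobj_def p_def using Bsum_closed[OF that] that by simp
  have pnn: "0 \<le> p k" for k
  proof -
    have "\<theta> * (2 * real k / real n - 1) \<ge> \<theta> * (- 1)"
      using th n2 by (intro mult_left_mono) auto
    then show ?thesis using th unfolding p_def by auto
  qed
  have "real r \<le> real (n - 1)" using r by simp
  then have pmono: "p r \<le> p (n - 1)"
    unfolding p_def using th n2 by (auto intro!: mult_left_mono divide_right_mono)
  have "p r * I r \<le> p (n - 1) * I (n - 1)"
    using pmono Imono[of r "n - 1"] r pnn I_nonneg by (intro mult_mono) auto
  then show "Aobj F f n \<theta> r \<le> Aobj F f n \<theta> (n - 1)"
    using A[of r] A[of "n - 1"] r n2 by simp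
qed

end

theorem proposition3:
  fixes F f :: "real \<Rightarrow> real" and n :: nat
  assumes n2: "n \<ge> 2"
    and f_nonneg: "\<And>t. f t \<ge> 0"
    and f_int: "integrable lborel f"
    and f_total: "(\<integral>t. f t \<partial>lborel) = 1"
    and F_cdf: "\<And>x. F x = (LINT t:{..x}|lborel. f t)"
    and f2_int: "integrable lborel (\<lambda>t. (f t)\<^sup>2)"
  shows
    "(unimodal_on UNIV f \<and> unimodal_on (supp_int F) (hazard F f) \<longrightarrow>
       (\<forall>r0. r0 \<in> {1..n-1} \<and> (\<forall>r\<in>{1..n-1}. Bsum F f n r / real r \<le> Bsum F f n r0 / real r0) \<longrightarrow>
          (let rhat = Max {r \<in> {1..n}. beta F f n r > 0} in
             r0 \<le> rhat \<and>
             (\<forall>\<theta>\<in>{0..1}. \<exists>r\<in>{1..n-1}.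
                 (\<forall>r'\<in>{1..n-1}. Aobj F f n \<theta> r' \<le> Aobj F f n \<theta> r) \<and> r0 \<le> r \<and> r \<le> rhat))))
     \<and>
     (antimono_on (supp_int F) (hazard F f) \<longrightarrow>
       (\<forall>\<theta>\<in>{0..1}. \<forall>r\<in>{1..n-1}. Aobj F f n \<theta> r \<le> Aobj F f n \<theta> (n - 1)))"
proof -
  interpret noise F f n using assms by unfold_locales auto
  show ?thesis using part1_comb[OF n2 beta1_pos] part2 by blast
qed

end
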